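(* Let $X_1,X_2,Y_1,Y_2,Z_1,Z_2$ be random variables with finite state spaces such that $(X_1,Y_1,Z_1)$ is independent of $(X_2,Y_2,Z_2)$. Put $X=(X_1,X_2)$, $Y=(Y_1,Y_2)$, $Z=(Z_1,Z_2)$. Then $\widetilde{SI}(X:Y;Z)=\widetilde{SI}(X_1:Y_1;Z_1)+\widetilde{SI}(X_2:Y_2;Z_2)$, $\widetilde{CI}(X:Y;Z)=\widetilde{CI}(X_1:Y_1;Z_1)+\widetilde{CI}(X_2:Y_2;Z_2)$, $\widetilde{UI}(X:Y\setminus Z)=\widetilde{UI}(X_1:Y_1\setminus Z_1)+\widetilde{UI}(X_2:Y_2\setminus Z_2)$, $\widetilde{UI}(X:Z\setminus Y)=\widetilde{UI}(X_1:Z_1\setminus Y_1)+\widetilde{UI}(X_2:Z_2\setminus Y_2)$.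
   Context: For any triple of random variables $(X,Y,Z)$ with finite state spaces $\mathcal X,\mathcal Y,\mathcal Z$ and joint distribution $P$, let $\Delta$ be the set of all distributions on $\mathcal X\times\mathcal Y\times\mathcal Z$ and $\Delta_P=\{Q\in\Delta: Q(X=x,Y=y)=P(X=x,Y=y)\text{ and }Q(X=x,Z=z)=P(X=x,Z=z)\ \forall x,y,z\}$; a subscript $Q$ means computed w.r.t. $Q$, no subscript means w.r.t. $P$. $CoI_Q(X;Y;Z)=MI_Q(X:Y)-MI_Q(X:Y|Z)$. Define $\widetilde{UI}(X:Y\setminus Z)=\min_{Q\in\Delta_P}MI_Q(X:Y|Z)$, $\widetilde{UI}(X:Z\setminus Y)=\min_{Q\in\Delta_P}MI_Q(X:Z|Y)$, $\widetilde{SI}(X:Y;Z)=\max_{Q\in\Delta_P}CoI_Q(X;Y;Z)$, $\widetilde{CI}(X:Y;Z)=MI(X:(Y,Z))-\min_{Q\in\Delta_P}MI_Q(X:(Y,Z))$. These definitions are applied to each of the triples $(X_1,Y_1,Z_1)$, $(X_2,Y_2,Z_2)$ and $(X,Y,Z)$ with their respective joint distributions. *)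

theory Defs
  imports Complex_Main
begin

text \<open>A triple (X,Y,Z) with joint distribution Q
  is represented by Q :: x \<times> y \<times> z \<Rightarrow> real.\<close>

definition is_dist :: "('a::finite \<Rightarrow> real) \<Rightarrow> bool" where
  "is_dist p \<longleftrightarrow> (\<forall>a. 0 \<le> p a) \<and> sum p UNIV = 1"

text \<open>Shannon entropy (base 2; terms with p a = 0 vanish since 0 * _ = 0).\<close>
definition ent :: "('a::finite \<Rightarrow> real) \<Rightarrow> real" where
  "ent p = - (\<Sum>a\<in>UNIV. p a * log 2 (p a))"

type_synonym ('x,'y,'z) tdist = "'x \<times> 'y \<times> 'z \<Rightarrow> real"

definition margXY :: "('x::finite,'y::finite,'z::finite) tdist \<Rightarrow> 'x \<times> 'y \<Rightarrow> real" where
  "margXY Q = (\<lambda>(x,y). \<Sum>z\<in>UNIV. Q (x,y,z))"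
definition margXZ :: "('x::finite,'y::finite,'z::finite) tdist \<Rightarrow> 'x \<times> 'z \<Rightarrow> real" where
  "margXZ Q = (\<lambda>(x,z). \<Sum>y\<in>UNIV. Q (x,y,z))"
definition margYZ :: "('x::finite,'y::finite,'z::finite) tdist \<Rightarrow> 'y \<times> 'z \<Rightarrow> real" where
  "margYZ Q = (\<lambda>(y,z). \<Sum>x\<in>UNIV. Q (x,y,z))"
definition margX :: "('x::finite,'y::finite,'z::finite) tdist \<Rightarrow> 'x \<Rightarrow> real" where
  "margX Q = (\<lambda>x. \<Sum>y\<in>UNIV. \<Sum>z\<in>UNIV. Q (x,y,z))"
definition margY :: "('x::finite,'y::finite,'z::finite) tdist \<Rightarrow> 'y \<Rightarrow> real" where
  "margY Q = (\<lambda>y. \<Sum>x\<in>UNIV. \<Sum>z\<in>UNIV. Q (x,y,z))"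
definition margZ :: "('x::finite,'y::finite,'z::finite) tdist \<Rightarrow> 'z \<Rightarrow> real" where
  "margZ Q = (\<lambda>z. \<Sum>x\<in>UNIV. \<Sum>y\<in>UNIV. Q (x,y,z))"

definition MI_XY :: "('x::finite,'y::finite,'z::finite) tdist \<Rightarrow> real" where
  "MI_XY Q = ent (margX Q) + ent (margY Q) - ent (margXY Q)"
definition MI_XY_Z :: "('x::finite,'y::finite,'z::finite) tdist \<Rightarrow> real" where
  "MI_XY_Z Q = ent (margXZ Q) + ent (margYZ Q) - ent Q - ent (margZ Q)"
definition MI_XZ_Y :: "('x::finite,'y::finite,'z::finite) tdist \<Rightarrow> real" where
  "MI_XZ_Y Q = ent (margXY Q) + ent (margYZ Q) - ent Q - ent (margY Q)"
definition MI_X_YZ :: "('x::finite,'y::finite,'z::finite) tdist \<Rightarrow> real" where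
  "MI_X_YZ Q = ent (margX Q) + ent (margYZ Q) - ent Q"
definition CoI :: "('x::finite,'y::finite,'z::finite) tdist \<Rightarrow> real" where
  "CoI Q = MI_XY Q - MI_XY_Z Q"

definition DeltaP :: "('x::finite,'y::finite,'z::finite) tdist \<Rightarrow> ('x,'y,'z) tdist set" where
  "DeltaP P = {Q. is_dist Q \<and> margXY Q = margXY P \<and> margXZ Q = margXZ P}"

text \<open>The minima/maxima exist (compact feasible set, continuous objective); we use Inf/Sup.\<close>
definition UI_Y :: "('x::finite,'y::finite,'z::finite) tdist \<Rightarrow> real" where
  "UI_Y P = Inf (MI_XY_Z ` DeltaP P)"
definition UI_Z :: "('x::finite,'y::finite,'z::finite) tdist \<Rightarrow> real" where
  "UI_Z P = Inf (MI_XZ_Y ` DeltaP P)"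
definition SI :: "('x::finite,'y::finite,'z::finite) tdist \<Rightarrow> real" where
  "SI P = Sup (CoI ` DeltaP P)"
definition CI :: "('x::finite,'y::finite,'z::finite) tdist \<Rightarrow> real" where
  "CI P = MI_X_YZ P - Inf (MI_X_YZ ` DeltaP P)"

text \<open>Joint distribution of X=(X1,X2), Y=(Y1,Y2), Z=(Z1,Z2) when (X1,Y1,Z1) is
  independent of (X2,Y2,Z2) with distributions P1, P2.\<close>
definition prod_dist ::
  "('x1::finite,'y1::finite,'z1::finite) tdist \<Rightarrow> ('x2::finite,'y2::finite,'z2::finite) tdist
   \<Rightarrow> ('x1 \<times> 'x2, 'y1 \<times> 'y2, 'z1 \<times> 'z2) tdist" where
  "prod_dist P1 P2 = (\<lambda>((x1,x2),(y1,y2),(z1,z2)). P1 (x1,y1,z1) * P2 (x2,y2,z2))"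

end

theory Submission
  imports Defs
begin

lemma sum_UNIV_pair: "(\<Sum>t\<in>(UNIV::('a::finite\<times>'b::finite) set). f t) = (\<Sum>a\<in>UNIV. \<Sum>b\<in>UNIV. f (a,b))"
  by (simp add: sum.cartesian_product UNIV_Times_UNIV[symmetric] del: UNIV_Times_UNIV)

definition push :: "('a::finite \<Rightarrow> 'k) \<Rightarrow> ('a \<Rightarrow> real) \<Rightarrow> 'k \<Rightarrow> real" where
  "push K Q k = (\<Sum>a\<in>UNIV. if K a = k then Q a else 0)"

definition H :: "('a::finite \<Rightarrow> real) \<Rightarrow> ('a \<Rightarrow> 'k) \<Rightarrow> real" where
  "H Q K = - (\<Sum>a\<in>UNIV. Q a * log 2 (push K Q (K a)))"

lemma push_mult: "push K Q k * c = (\<Sum>a\<in>UNIV. if K a = k then Q a * c else 0)"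
  unfolding push_def sum_distrib_right by (rule sum.cong) auto

lemma sum_push: "(\<Sum>k\<in>(UNIV::'k::finite set). push K Q k * g k) = (\<Sum>a\<in>UNIV. Q a * g (K a))"
proof -
  have "(\<Sum>k\<in>(UNIV::'k set). push K Q k * g k) = (\<Sum>k\<in>(UNIV::'k set). \<Sum>a\<in>UNIV. if K a = k then Q a * g (K a) else 0)"
    by (rule sum.cong[OF refl]) (simp add: push_mult cong: if_cong)
  also have "\<dots> = (\<Sum>a\<in>UNIV. \<Sum>k\<in>(UNIV::'k set). if K a = k then Q a * g (K a) else 0)"
    by (rule sum.swap)
  also have "\<dots> = (\<Sum>a\<in>UNIV. Q a * g (K a))" by simp
  finally show ?thesis .
qed

lemma ent_push: "ent (push K Q :: 'k::finite \<Rightarrow> real) = H Q K"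
  unfolding ent_def H_def using sum_push[of K Q "\<lambda>k. log 2 (push K Q k)"] by simp

lemma sum_push1: "(\<Sum>k\<in>(UNIV::'k::finite set). push K Q k) = (\<Sum>a\<in>UNIV. Q a)"
  using sum_push[of K Q "\<lambda>_. 1"] by simp

lemma push_nonneg: "(\<forall>a. 0 \<le> Q a) \<Longrightarrow> 0 \<le> push K Q k"
  unfolding push_def by (intro sum_nonneg) auto

lemma dist_push: "is_dist Q \<Longrightarrow> is_dist (push K Q :: 'k::finite \<Rightarrow> real)"
  unfolding is_dist_def using sum_push1[of K Q] push_nonneg[of Q K] by auto

lemma push_comp: "push L (push K Q :: 'k::finite \<Rightarrow> real) = push (\<lambda>a. L (K a)) Q"
proof
  fix l
  have "push L (push K Q) l = (\<Sum>k\<in>(UNIV::'k set). push K Q k * (if L k = l then 1 else 0))"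
    unfolding push_def[of L] by (rule sum.cong) auto
  also have "\<dots> = push (\<lambda>a. L (K a)) Q l" unfolding sum_push by (simp add: push_def if_distrib cong: if_cong)
  finally show "push L (push K Q) l = push (\<lambda>a. L (K a)) Q l" .
qed

lemma H_cong: "(\<And>a b. K a = K b \<longleftrightarrow> L a = L b) \<Longrightarrow> H Q K = H Q L"
  unfolding H_def push_def by (intro arg_cong[where f=uminus] sum.cong refl) (auto cong: if_cong)

lemma ent_as_H: "ent Q = H Q (\<lambda>a. a)"
proof -
  have "push (\<lambda>a. a) Q = Q" by (auto simp: push_def)
  then show ?thesis using ent_push[of "\<lambda>a. a" Q] by simp
qed

lemma sum_if_const: "(\<Sum>b\<in>A. if P then f b else 0) = (if P then sum f A else (0::real))"
  by auto
lemma if_and_eq: "(if a = x \<and> b = y then c else 0) = (if a = x then (if b = y then c else 0) else (0::real))"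
  by simp
lemma margXY_push: "margXY Q = push (\<lambda>(x,y,z). (x,y)) Q"
  by (rule ext) (auto simp: margXY_def push_def sum_UNIV_pair if_and_eq sum_if_const)
lemma margXZ_push: "margXZ Q = push (\<lambda>(x,y,z). (x,z)) Q"
  by (rule ext) (auto simp: margXZ_def push_def sum_UNIV_pair if_and_eq sum_if_const)
lemma margYZ_push: "margYZ Q = push (\<lambda>(x,y,z). (y,z)) Q"
  by (rule ext) (auto simp: margYZ_def push_def sum_UNIV_pair if_and_eq sum_if_const)
lemma margX_push: "margX Q = push (\<lambda>(x,y,z). x) Q"
  by (rule ext) (auto simp: margX_def push_def sum_UNIV_pair if_and_eq sum_if_const)
lemma margY_push: "margY Q = push (\<lambda>(x,y,z). y) Q"
  by (rule ext) (auto simp: margY_def push_def sum_UNIV_pair if_and_eq sum_if_const)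
lemma margZ_push: "margZ Q = push (\<lambda>(x,y,z). z) Q"
  by (rule ext) (auto simp: margZ_def push_def sum_UNIV_pair if_and_eq sum_if_const)

lemma ptw:
  fixes r u v w :: real
  assumes "0 \<le> r" "r \<le> u" "r \<le> v" "u \<le> w"
  shows "(r - u*v/w)/ln 2 \<le> r*(log 2 r + log 2 w - log 2 u - log 2 v)"
proof (cases "r = 0")
  case True
  then show ?thesis using assms by (simp add: divide_nonpos_pos)
next
  case False
  then have pos: "0 < r" "0 < u" "0 < v" "0 < w" using assms by auto
  define x where "x = r*w/(u*v)"
  have xp: "0 < x" using pos by (simp add: x_def)
  have "ln (1/x) \<le> 1/x - 1" using xp by (intro ln_le_minus_one) simp
  then have lx: "1 - 1/x \<le> ln x" using xp by (simp add: ln_div)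
  have "log 2 r + log 2 w - log 2 u - log 2 v = ln x / ln 2"
    using pos by (simp add: x_def log_def ln_div ln_mult diff_divide_distrib add_divide_distrib)
  moreover have "r - u*v/w \<le> r * ln x"
  proof -
    have "r * (1 - 1/x) = r - u*v/w" using pos by (simp add: x_def field_simps)
    moreover have "r * (1 - 1/x) \<le> r * ln x" using lx pos by (intro mult_left_mono) auto
    ultimately show ?thesis by simp
  qed
  ultimately show ?thesis by (simp add: divide_right_mono)
qed

lemma ent_marg: "ent (push K R :: 'k::finite \<Rightarrow> real) = - (\<Sum>t\<in>UNIV. R t * log 2 (push K R (K t)))"
  by (simp add: ent_push H_def)

lemma sum3: "(\<Sum>t\<in>(UNIV::('a::finite\<times>'b::finite\<times>'c::finite) set). f t) = (\<Sum>a\<in>UNIV. \<Sum>b\<in>UNIV. \<Sum>c\<in>UNIV. f (a,b,c))"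
  by (simp add: sum_UNIV_pair)

lemma SSA:
  fixes R :: "('a::finite,'b::finite,'c::finite) tdist"
  assumes "is_dist R"
  shows "ent R + ent (margY R) \<le> ent (margXY R) + ent (margYZ R)"
proof -
  have nn: "\<And>t. 0 \<le> R t" and s1: "sum R UNIV = 1" using assms by (auto simp: is_dist_def)
  let ?mAB = "margXY R" and ?mBC = "margYZ R" and ?mB = "margY R"
  have eR: "ent R = - (\<Sum>a\<in>UNIV. \<Sum>b\<in>UNIV. \<Sum>c\<in>UNIV. R (a,b,c) * log 2 (R (a,b,c)))"
    by (simp add: ent_def sum3)
  have eAB: "ent ?mAB = - (\<Sum>a\<in>UNIV. \<Sum>b\<in>UNIV. \<Sum>c\<in>UNIV. R (a,b,c) * log 2 (?mAB (a,b)))"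
    unfolding margXY_push ent_marg by (simp add: sum3)
  have eBC: "ent ?mBC = - (\<Sum>a\<in>UNIV. \<Sum>b\<in>UNIV. \<Sum>c\<in>UNIV. R (a,b,c) * log 2 (?mBC (b,c)))"
    unfolding margYZ_push ent_marg by (simp add: sum3)
  have eB: "ent ?mB = - (\<Sum>a\<in>UNIV. \<Sum>b\<in>UNIV. \<Sum>c\<in>UNIV. R (a,b,c) * log 2 (?mB b))"
    unfolding margY_push ent_marg by (simp add: sum3)
  have le1: "R (a,b,c) \<le> ?mAB (a,b)" for a b c
    unfolding margXY_def using nn member_le_sum[of c UNIV "\<lambda>z. R(a,b,z)"] by simp
  have le2: "R (a,b,c) \<le> ?mBC (b,c)" for a b c
    unfolding margYZ_def using nn member_le_sum[of a UNIV "\<lambda>x. R(x,b,c)"] by simp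
  have le3: "?mAB (a,b) \<le> ?mB b" for a b
    unfolding margXY_def margY_def using nn member_le_sum[of a UNIV "\<lambda>x. \<Sum>z\<in>UNIV. R(x,b,z)"] by (simp add: sum_nonneg)
  have sA: "(\<Sum>a\<in>UNIV. ?mAB (a,b)) = ?mB b" for b by (simp add: margXY_def margY_def)
  have sC: "(\<Sum>c\<in>UNIV. ?mBC (b,c)) = ?mB b" for b by (simp add: margYZ_def margY_def, rule sum.swap)
  have sB: "(\<Sum>b\<in>UNIV. ?mB b) = 1"
  proof -
    have "(\<Sum>b\<in>UNIV. ?mB b) = (\<Sum>a\<in>UNIV. \<Sum>b\<in>UNIV. \<Sum>c\<in>UNIV. R(a,b,c))"
      unfolding margY_def by (rule sum.swap)
    then show ?thesis using s1 by (simp add: sum3)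
  qed
  have "(\<Sum>a\<in>UNIV. \<Sum>b\<in>UNIV. \<Sum>c\<in>UNIV. ?mAB (a,b) * ?mBC (b,c) / ?mB b)
      = (\<Sum>b\<in>UNIV. \<Sum>a\<in>UNIV. \<Sum>c\<in>UNIV. ?mAB (a,b) * ?mBC (b,c) / ?mB b)"
    by (rule sum.swap)
  also have "\<dots> = (\<Sum>b\<in>UNIV. (\<Sum>a\<in>UNIV. ?mAB (a,b)) * (\<Sum>c\<in>UNIV. ?mBC (b,c)) / ?mB b)"
    by (simp add: sum_product sum_divide_distrib)
  also have "\<dots> = (\<Sum>b\<in>UNIV. ?mB b)"
    unfolding sA sC by (rule sum.cong) auto
  finally have T: "(\<Sum>a\<in>UNIV. \<Sum>b\<in>UNIV. \<Sum>c\<in>UNIV. ?mAB (a,b) * ?mBC (b,c) / ?mB b) = 1"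
    using sB by simp
  have "(\<Sum>a\<in>UNIV. \<Sum>b\<in>UNIV. \<Sum>c\<in>UNIV. (R (a,b,c) - ?mAB (a,b) * ?mBC (b,c) / ?mB b) / ln 2)
     \<le> (\<Sum>a\<in>UNIV. \<Sum>b\<in>UNIV. \<Sum>c\<in>UNIV. R (a,b,c) * (log 2 (R (a,b,c)) + log 2 (?mB b) - log 2 (?mAB (a,b)) - log 2 (?mBC (b,c))))"
    by (intro sum_mono ptw nn le1 le2 le3)
  moreover have "(\<Sum>a\<in>UNIV. \<Sum>b\<in>UNIV. \<Sum>c\<in>UNIV. (R (a,b,c) - ?mAB (a,b) * ?mBC (b,c) / ?mB b) / ln 2) = 0"
    using s1 T by (simp add: sum_divide_distrib[symmetric] sum_subtractf sum3)
  ultimately show ?thesis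
    unfolding eR eAB eBC eB by (simp add: sum_subtractf sum.distrib algebra_simps)
qed

lemma SSA_H:
  fixes f :: "'a::finite \<Rightarrow> 'b::finite" and g :: "'a \<Rightarrow> 'c::finite" and h :: "'a \<Rightarrow> 'd::finite"
  assumes "is_dist Q"
  shows "H Q (\<lambda>a. (f a, g a, h a)) + H Q g \<le> H Q (\<lambda>a. (f a, g a)) + H Q (\<lambda>a. (g a, h a))"
proof -
  let ?R = "push (\<lambda>a. (f a, g a, h a)) Q"
  have d: "is_dist ?R" using assms by (rule dist_push)
  have "margXY ?R = push (\<lambda>a. (f a, g a)) Q" unfolding margXY_push push_comp by simp
  moreover have "margYZ ?R = push (\<lambda>a. (g a, h a)) Q" unfolding margYZ_push push_comp by simp
  moreover have "margY ?R = push (\<lambda>a. g a) Q" unfolding margY_push push_comp by simp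
  ultimately show ?thesis using SSA[OF d] by (simp add: ent_push)
qed

lemma H_unit: "is_dist Q \<Longrightarrow> H Q (\<lambda>a. ()) = 0"
  unfolding H_def push_def is_dist_def by simp

lemma subadd_H:
  fixes f :: "'a::finite \<Rightarrow> 'b::finite" and h :: "'a \<Rightarrow> 'd::finite"
  assumes "is_dist Q"
  shows "H Q (\<lambda>a. (f a, h a)) \<le> H Q f + H Q h"
proof -
  have "H Q (\<lambda>a. (f a, (), h a)) + H Q (\<lambda>a. ()) \<le> H Q (\<lambda>a. (f a, ())) + H Q (\<lambda>a. ((), h a))"
    using SSA_H[OF assms, of f "\<lambda>a. ()" h] by simp
  moreover have "H Q (\<lambda>a. (f a, (), h a)) = H Q (\<lambda>a. (f a, h a))" by (rule H_cong) auto
  moreover have "H Q (\<lambda>a. (f a, ())) = H Q f" by (rule H_cong) auto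
  moreover have "H Q (\<lambda>a. ((), h a)) = H Q h" by (rule H_cong) auto
  ultimately show ?thesis using H_unit[OF assms] by simp
qed

lemma push_ge: "(\<forall>a. 0 \<le> Q a) \<Longrightarrow> Q a \<le> push K Q (K a)"
  unfolding push_def using member_le_sum[of a UNIV "\<lambda>b. if K b = K a then Q b else 0"]
  by (simp add: if_split_mem2)

definition T :: "('a::finite \<Rightarrow> real) \<Rightarrow> ('b::finite \<Rightarrow> real) \<Rightarrow> 'a \<times> 'b \<Rightarrow> real" where
  "T Q1 Q2 = (\<lambda>(t1,t2). Q1 t1 * Q2 t2)"

lemma push_T: "push (\<lambda>(s1,s2). (K1 s1, K2 s2)) (T Q1 Q2) (k1,k2) = push K1 Q1 k1 * push K2 Q2 k2"
proof -
  have "push (\<lambda>(s1,s2). (K1 s1, K2 s2)) (T Q1 Q2) (k1,k2)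
     = (\<Sum>s1\<in>UNIV. \<Sum>s2\<in>UNIV. (if K1 s1 = k1 then Q1 s1 else 0) * (if K2 s2 = k2 then Q2 s2 else 0))"
    unfolding push_def T_def sum_UNIV_pair by (intro sum.cong refl) auto
  then show ?thesis by (simp add: push_def sum_product)
qed

lemma H_prod:
  assumes "is_dist Q1" "is_dist Q2"
  shows "H (T Q1 Q2) (\<lambda>(t1,t2). (K1 t1, K2 t2)) = H Q1 K1 + H Q2 K2"
proof -
  have n1: "\<forall>a. 0 \<le> Q1 a" and n2: "\<forall>a. 0 \<le> Q2 a" and s1: "sum Q1 UNIV = 1" and s2: "sum Q2 UNIV = 1"
    using assms by (auto simp: is_dist_def)
  have "H (T Q1 Q2) (\<lambda>(t1,t2). (K1 t1, K2 t2)) = - (\<Sum>t1\<in>UNIV. \<Sum>t2\<in>UNIV.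
      Q1 t1 * log 2 (push K1 Q1 (K1 t1)) * Q2 t2 + Q2 t2 * log 2 (push K2 Q2 (K2 t2)) * Q1 t1)"
    unfolding H_def sum_UNIV_pair
  proof (intro arg_cong[where f=uminus] sum.cong refl)
    fix t1 t2
    show "T Q1 Q2 (t1, t2) * log 2 (push (\<lambda>(t1, t2). (K1 t1, K2 t2)) (T Q1 Q2) (case (t1, t2) of (t1, t2) \<Rightarrow> (K1 t1, K2 t2))) =
      Q1 t1 * log 2 (push K1 Q1 (K1 t1)) * Q2 t2 + Q2 t2 * log 2 (push K2 Q2 (K2 t2)) * Q1 t1"
    proof (cases "Q1 t1 = 0 \<or> Q2 t2 = 0")
      case True then show ?thesis by (auto simp: T_def)
    next
      case False
      then have "0 < Q1 t1" "0 < Q2 t2" using n1 n2 by (auto simp: order_le_less)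
      then have "0 < push K1 Q1 (K1 t1)" "0 < push K2 Q2 (K2 t2)"
        using push_ge[OF n1, of t1 K1] push_ge[OF n2, of t2 K2] by auto
      then show ?thesis by (simp add: push_T log_mult_pos, simp add: T_def algebra_simps)
    qed
  qed
  also have "\<dots> = H Q1 K1 + H Q2 K2"
    unfolding H_def sum.distrib by (simp add: sum_distrib_left[symmetric] sum_distrib_right[symmetric] s1 s2)
  finally show ?thesis .
qed

lemma dist_T: "is_dist Q1 \<Longrightarrow> is_dist Q2 \<Longrightarrow> is_dist (T Q1 Q2)"
  unfolding is_dist_def T_def by (auto simp: sum_UNIV_pair sum_product[symmetric])

definition sig :: "('x1 \<times> 'y1 \<times> 'z1) \<times> ('x2 \<times> 'y2 \<times> 'z2) \<Rightarrow> ('x1 \<times> 'x2) \<times> ('y1 \<times> 'y2) \<times> ('z1 \<times> 'z2)" where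
  "sig = (\<lambda>((x1,y1,z1),(x2,y2,z2)). ((x1,x2),(y1,y2),(z1,z2)))"

lemma prod_push: "prod_dist Q1 Q2 = push sig (T Q1 Q2)"
  apply (rule ext)
  apply (simp only: split_paired_all)
  subgoal for x1 x2 y1 y2 z1 z2
  proof -
    have e: "(sig t = ((x1,x2),(y1,y2),(z1,z2))) \<longleftrightarrow> t = ((x1,y1,z1),(x2,y2,z2))" for t
      by (auto simp: sig_def split: prod.splits)
    show ?thesis unfolding push_def e by (simp add: prod_dist_def T_def)
  qed
  done

lemma dist_prod: "is_dist Q1 \<Longrightarrow> is_dist Q2 \<Longrightarrow> is_dist (prod_dist Q1 Q2)"
  unfolding prod_push by (intro dist_push dist_T)

lemma H_prod_marg:
  fixes L :: "('x1::finite \<times> 'x2::finite) \<times> ('y1::finite \<times> 'y2::finite) \<times> ('z1::finite \<times> 'z2::finite) \<Rightarrow> 'k::finite"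
  assumes "is_dist Q1" "is_dist Q2"
    and "\<And>a b. L (sig a) = L (sig b) \<longleftrightarrow> (K1 (fst a) = K1 (fst b) \<and> K2 (snd a) = K2 (snd b))"
  shows "H (prod_dist Q1 Q2) L = H Q1 K1 + H Q2 K2"
proof -
  have "H (prod_dist Q1 Q2) L = ent (push L (prod_dist Q1 Q2))" by (simp add: ent_push)
  also have "\<dots> = H (T Q1 Q2) (\<lambda>a. L (sig a))" unfolding prod_push push_comp ent_push ..
  also have "\<dots> = H (T Q1 Q2) (\<lambda>(t1,t2). (K1 t1, K2 t2))"
    by (rule H_cong) (auto simp: assms(3) split: prod.splits)
  also have "\<dots> = H Q1 K1 + H Q2 K2" using H_prod[OF assms(1,2)] .
  finally show ?thesis .
qed

context
  fixes Q1 :: "('x1::finite, 'y1::finite, 'z1::finite) tdist"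
    and Q2 :: "('x2::finite, 'y2::finite, 'z2::finite) tdist"
  assumes d1: "is_dist Q1" and d2: "is_dist Q2"
begin

lemma ent_prod_X: "ent (margX (prod_dist Q1 Q2)) = ent (margX Q1) + ent (margX Q2)"
  unfolding margX_push ent_push by (rule H_prod_marg[OF d1 d2]) (auto simp: sig_def split: prod.splits)
lemma ent_prod_Y: "ent (margY (prod_dist Q1 Q2)) = ent (margY Q1) + ent (margY Q2)"
  unfolding margY_push ent_push by (rule H_prod_marg[OF d1 d2]) (auto simp: sig_def split: prod.splits)
lemma ent_prod_Z: "ent (margZ (prod_dist Q1 Q2)) = ent (margZ Q1) + ent (margZ Q2)"
  unfolding margZ_push ent_push by (rule H_prod_marg[OF d1 d2]) (auto simp: sig_def split: prod.splits)
lemma ent_prod_XY: "ent (margXY (prod_dist Q1 Q2)) = ent (margXY Q1) + ent (margXY Q2)"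
  unfolding margXY_push ent_push by (rule H_prod_marg[OF d1 d2]) (auto simp: sig_def split: prod.splits)
lemma ent_prod_XZ: "ent (margXZ (prod_dist Q1 Q2)) = ent (margXZ Q1) + ent (margXZ Q2)"
  unfolding margXZ_push ent_push by (rule H_prod_marg[OF d1 d2]) (auto simp: sig_def split: prod.splits)
lemma ent_prod_YZ: "ent (margYZ (prod_dist Q1 Q2)) = ent (margYZ Q1) + ent (margYZ Q2)"
  unfolding margYZ_push ent_push by (rule H_prod_marg[OF d1 d2]) (auto simp: sig_def split: prod.splits)
lemma ent_prod: "ent (prod_dist Q1 Q2) = ent Q1 + ent Q2"
  unfolding ent_as_H by (rule H_prod_marg[OF d1 d2]) (auto simp: sig_def split: prod.splits)

end

definition pi1 :: "('x1 \<times> 'x2) \<times> ('y1 \<times> 'y2) \<times> ('z1 \<times> 'z2) \<Rightarrow> 'x1 \<times> 'y1 \<times> 'z1" where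
  "pi1 = (\<lambda>(x,y,z). (fst x, fst y, fst z))"
definition pi2 :: "('x1 \<times> 'x2) \<times> ('y1 \<times> 'y2) \<times> ('z1 \<times> 'z2) \<Rightarrow> 'x2 \<times> 'y2 \<times> 'z2" where
  "pi2 = (\<lambda>(x,y,z). (snd x, snd y, snd z))"

lemma key:
  fixes Q :: "('x1::finite \<times> 'x2::finite, 'y1::finite \<times> 'y2::finite, 'z1::finite \<times> 'z2::finite) tdist"
  assumes "is_dist Q"
  shows "H Q (\<lambda>a. a) + H Q (\<lambda>(x,y,z). (fst y, fst z)) + H Q (\<lambda>(x,y,z). (snd y, snd z))
     \<le> H Q pi1 + H Q pi2 + H Q (\<lambda>(x,y,z). (y,z))"
proof -
  let ?X1 = "\<lambda>(x::'x1\<times>'x2,y::'y1\<times>'y2,z::'z1\<times>'z2). fst x"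
  let ?X2 = "\<lambda>(x::'x1\<times>'x2,y::'y1\<times>'y2,z::'z1\<times>'z2). snd x"
  let ?W1 = "\<lambda>(x::'x1\<times>'x2,y::'y1\<times>'y2,z::'z1\<times>'z2). (fst y, fst z)"
  let ?W2 = "\<lambda>(x::'x1\<times>'x2,y::'y1\<times>'y2,z::'z1\<times>'z2). (snd y, snd z)"
  let ?W = "\<lambda>(x::'x1\<times>'x2,y::'y1\<times>'y2,z::'z1\<times>'z2). (y, z)"
  have i: "H Q (\<lambda>a. (?X1 a, ?W a, ?X2 a)) + H Q ?W \<le> H Q (\<lambda>a. (?X1 a, ?W a)) + H Q (\<lambda>a. (?W a, ?X2 a))"
    by (rule SSA_H[OF assms])
  have ii: "H Q (\<lambda>a. (?X1 a, ?W1 a, ?W2 a)) + H Q ?W1 \<le> H Q (\<lambda>a. (?X1 a, ?W1 a)) + H Q (\<lambda>a. (?W1 a, ?W2 a))"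
    by (rule SSA_H[OF assms])
  have iii: "H Q (\<lambda>a. (?X2 a, ?W2 a, ?W1 a)) + H Q ?W2 \<le> H Q (\<lambda>a. (?X2 a, ?W2 a)) + H Q (\<lambda>a. (?W2 a, ?W1 a))"
    by (rule SSA_H[OF assms])
  have c1: "H Q (\<lambda>a. (?X1 a, ?W a, ?X2 a)) = H Q (\<lambda>a. a)"
    by (rule H_cong) (auto split: prod.splits)
  have c2: "H Q (\<lambda>a. (?X1 a, ?W a)) = H Q (\<lambda>a. (?X1 a, ?W1 a, ?W2 a))"
    by (rule H_cong) (auto split: prod.splits)
  have c3: "H Q (\<lambda>a. (?W a, ?X2 a)) = H Q (\<lambda>a. (?X2 a, ?W2 a, ?W1 a))"
    by (rule H_cong) (auto split: prod.splits)
  have c4: "H Q (\<lambda>a. (?W1 a, ?W2 a)) = H Q ?W"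
    by (rule H_cong) (auto split: prod.splits)
  have c5: "H Q (\<lambda>a. (?W2 a, ?W1 a)) = H Q ?W"
    by (rule H_cong) (auto split: prod.splits)
  have c6: "H Q (\<lambda>a. (?X1 a, ?W1 a)) = H Q pi1"
    by (rule H_cong) (auto simp: pi1_def split: prod.splits)
  have c7: "H Q (\<lambda>a. (?X2 a, ?W2 a)) = H Q pi2"
    by (rule H_cong) (auto simp: pi2_def split: prod.splits)
  show ?thesis using i ii iii unfolding c1 c2 c3 c4 c5 c6 c7 by linarith
qed


lemma margX_XY: "margX Q = push fst (margXY Q)"
  unfolding margX_push margXY_push push_comp by (intro arg_cong[where f="\<lambda>K. push K Q"] ext) (auto split: prod.splits)
lemma margY_XY: "margY Q = push snd (margXY Q)"
  unfolding margY_push margXY_push push_comp by (intro arg_cong[where f="\<lambda>K. push K Q"] ext) (auto split: prod.splits)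
lemma margX_XZ: "margX Q = push fst (margXZ Q)"
  unfolding margX_push margXZ_push push_comp by (intro arg_cong[where f="\<lambda>K. push K Q"] ext) (auto split: prod.splits)
lemma margZ_XZ: "margZ Q = push snd (margXZ Q)"
  unfolding margZ_push margXZ_push push_comp by (intro arg_cong[where f="\<lambda>K. push K Q"] ext) (auto split: prod.splits)

definition MI_XZ :: "('x::finite,'y::finite,'z::finite) tdist \<Rightarrow> real" where
  "MI_XZ Q = ent (margX Q) + ent (margZ Q) - ent (margXZ Q)"

lemma DP_facts:
  assumes "Q \<in> DeltaP P"
  shows "MI_XY_Z Q = MI_X_YZ Q - MI_XZ P" "MI_XZ_Y Q = MI_X_YZ Q - MI_XY P"
    "CoI Q = MI_XY P + MI_XZ P - MI_X_YZ Q"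
proof -
  have a: "margXY Q = margXY P" "margXZ Q = margXZ P" using assms by (auto simp: DeltaP_def)
  then have b: "margX Q = margX P" "margY Q = margY P" "margZ Q = margZ P"
    by (metis margX_XY, metis margY_XY, metis margZ_XZ)
  show "MI_XY_Z Q = MI_X_YZ Q - MI_XZ P" "MI_XZ_Y Q = MI_X_YZ Q - MI_XY P"
    "CoI Q = MI_XY P + MI_XZ P - MI_X_YZ Q"
    unfolding MI_XY_Z_def MI_X_YZ_def MI_XZ_def MI_XZ_Y_def MI_XY_def CoI_def a b by simp_all
qed

lemma F_nonneg: "is_dist Q \<Longrightarrow> 0 \<le> MI_X_YZ Q"
proof -
  assume d: "is_dist Q"
  have "H Q (\<lambda>a. a) = H Q (\<lambda>a. ((\<lambda>(x,y,z). x) a, (\<lambda>(x,y,z). (y,z)) a))"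
    by (rule H_cong) (auto split: prod.splits)
  then show ?thesis using subadd_H[OF d, of "\<lambda>(x,y,z). x" "\<lambda>(x,y,z). (y,z)"]
    unfolding MI_X_YZ_def margX_push margYZ_push ent_push ent_as_H[of Q] by simp
qed

lemma self_DP: "is_dist P \<Longrightarrow> P \<in> DeltaP P"
  by (simp add: DeltaP_def)

lemma Inf_minus:
  fixes S :: "real set"
  assumes "S \<noteq> {}" "bdd_below S"
  shows "Inf ((\<lambda>t. t - c) ` S) = Inf S - c"
proof (rule antisym)
  have bb: "bdd_below ((\<lambda>t. t - c) ` S)"
    using assms(2) unfolding bdd_below_def by (auto intro: diff_right_mono)
  have "Inf ((\<lambda>t. t - c) ` S) + c \<le> Inf S"
  proof (rule cInf_greatest[OF assms(1)])
    fix s assume "s \<in> S"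
    then have "Inf ((\<lambda>t. t - c) ` S) \<le> s - c" by (intro cInf_lower bb) auto
    then show "Inf ((\<lambda>t. t - c) ` S) + c \<le> s" by simp
  qed
  then show "Inf ((\<lambda>t. t - c) ` S) \<le> Inf S - c" by simp
  show "Inf S - c \<le> Inf ((\<lambda>t. t - c) ` S)"
    using assms by (auto intro!: cInf_greatest cInf_lower)
qed

lemma Sup_cminus:
  fixes S :: "real set"
  assumes "S \<noteq> {}" "bdd_below S"
  shows "Sup ((\<lambda>t. c - t) ` S) = c - Inf S"
proof (rule antisym)
  show "Sup ((\<lambda>t. c - t) ` S) \<le> c - Inf S"
    using assms by (auto intro!: cSup_least cInf_lower)
  have ba: "bdd_above ((\<lambda>t. c - t) ` S)"
    using assms(2) unfolding bdd_below_def bdd_above_def by (auto intro: diff_left_mono)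
  have "c - Sup ((\<lambda>t. c - t) ` S) \<le> Inf S"
  proof (rule cInf_greatest[OF assms(1)])
    fix s assume "s \<in> S"
    then have "c - s \<le> Sup ((\<lambda>t. c - t) ` S)" by (intro cSup_upper ba) auto
    then show "c - Sup ((\<lambda>t. c - t) ` S) \<le> s" by simp
  qed
  then show "c - Inf S \<le> Sup ((\<lambda>t. c - t) ` S)" by simp
qed

definition IF :: "('x::finite,'y::finite,'z::finite) tdist \<Rightarrow> real" where
  "IF P = Inf (MI_X_YZ ` DeltaP P)"

lemma reps:
  assumes "is_dist P"
  shows "UI_Y P = IF P - MI_XZ P" "UI_Z P = IF P - MI_XY P"
    "SI P = MI_XY P + MI_XZ P - IF P" "CI P = MI_X_YZ P - IF P"
proof -
  have ne: "MI_X_YZ ` DeltaP P \<noteq> {}" using self_DP[OF assms] by auto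
  have bb: "bdd_below (MI_X_YZ ` DeltaP P)"
    by (rule bdd_belowI[where m=0]) (auto simp: DeltaP_def F_nonneg)
  have "MI_XY_Z ` DeltaP P = (\<lambda>t. t - MI_XZ P) ` (MI_X_YZ ` DeltaP P)"
    unfolding image_image by (rule image_cong) (auto simp: DP_facts)
  then show "UI_Y P = IF P - MI_XZ P" unfolding UI_Y_def IF_def using Inf_minus[OF ne bb] by simp
  have "MI_XZ_Y ` DeltaP P = (\<lambda>t. t - MI_XY P) ` (MI_X_YZ ` DeltaP P)"
    unfolding image_image by (rule image_cong) (auto simp: DP_facts)
  then show "UI_Z P = IF P - MI_XY P" unfolding UI_Z_def IF_def using Inf_minus[OF ne bb] by simp
  have "CoI ` DeltaP P = (\<lambda>t. (MI_XY P + MI_XZ P) - t) ` (MI_X_YZ ` DeltaP P)"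
    unfolding image_image by (rule image_cong) (auto simp: DP_facts)
  then show "SI P = MI_XY P + MI_XZ P - IF P" unfolding SI_def IF_def using Sup_cminus[OF ne bb] by simp
  show "CI P = MI_X_YZ P - IF P" unfolding CI_def IF_def ..
qed

lemma margXY_prod: "margXY (prod_dist Q1 Q2) = (\<lambda>(x,y). margXY Q1 (fst x, fst y) * margXY Q2 (snd x, snd y))"
  by (rule ext) (auto simp: margXY_def prod_dist_def sum_UNIV_pair sum_product split: prod.splits)
lemma margXZ_prod: "margXZ (prod_dist Q1 Q2) = (\<lambda>(x,z). margXZ Q1 (fst x, fst z) * margXZ Q2 (snd x, snd z))"
  by (rule ext) (auto simp: margXZ_def prod_dist_def sum_UNIV_pair sum_product split: prod.splits)

lemma push_fst_T: "is_dist Q2 \<Longrightarrow> push fst (T Q1 Q2) = Q1"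
proof (rule ext)
  fix x assume d: "is_dist Q2"
  have "push fst (T Q1 Q2) x = (\<Sum>a\<in>UNIV. if a = x then Q1 a * sum Q2 UNIV else 0)"
    unfolding push_def T_def sum_UNIV_pair by (intro sum.cong refl) (auto simp: sum_distrib_left)
  then show "push fst (T Q1 Q2) x = Q1 x" using d by (simp add: is_dist_def)
qed
lemma push_snd_T: "is_dist Q1 \<Longrightarrow> push snd (T Q1 Q2) = Q2"
proof (rule ext)
  fix x assume d: "is_dist Q1"
  have "push snd (T Q1 Q2) x = (\<Sum>b\<in>UNIV. \<Sum>a\<in>UNIV. if b = x then Q1 a * Q2 b else 0)"
    unfolding push_def T_def sum_UNIV_pair by (rule sum.swap[symmetric, THEN trans]) (intro sum.cong refl, auto)
  also have "\<dots> = (\<Sum>b\<in>UNIV. if b = x then sum Q1 UNIV * Q2 b else 0)"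
    by (intro sum.cong refl) (auto simp: sum_distrib_right)
  finally show "push snd (T Q1 Q2) x = Q2 x" using d by (simp add: is_dist_def)
qed

lemma pi1_prod: "is_dist Q2 \<Longrightarrow> push pi1 (prod_dist Q1 Q2) = Q1"
proof -
  assume d: "is_dist Q2"
  have "(\<lambda>a. pi1 (sig a)) = fst" by (rule ext) (auto simp: pi1_def sig_def split: prod.splits)
  then show ?thesis unfolding prod_push push_comp using push_fst_T[OF d] by metis
qed
lemma pi2_prod: "is_dist Q1 \<Longrightarrow> push pi2 (prod_dist Q1 Q2) = Q2"
proof -
  assume d: "is_dist Q1"
  have "(\<lambda>a. pi2 (sig a)) = snd" by (rule ext) (auto simp: pi2_def sig_def split: prod.splits)
  then show ?thesis unfolding prod_push push_comp using push_snd_T[OF d] by metis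
qed

lemma XY_pi1: "margXY (push pi1 R) = push (\<lambda>(x,y). (fst x, fst y)) (margXY R)"
  unfolding margXY_push push_comp by (intro arg_cong[where f="\<lambda>K. push K R"] ext) (auto simp: pi1_def split: prod.splits)
lemma XZ_pi1: "margXZ (push pi1 R) = push (\<lambda>(x,y). (fst x, fst y)) (margXZ R)"
  unfolding margXZ_push push_comp by (intro arg_cong[where f="\<lambda>K. push K R"] ext) (auto simp: pi1_def split: prod.splits)
lemma XY_pi2: "margXY (push pi2 R) = push (\<lambda>(x,y). (snd x, snd y)) (margXY R)"
  unfolding margXY_push push_comp by (intro arg_cong[where f="\<lambda>K. push K R"] ext) (auto simp: pi2_def split: prod.splits)
lemma XZ_pi2: "margXZ (push pi2 R) = push (\<lambda>(x,y). (snd x, snd y)) (margXZ R)"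
  unfolding margXZ_push push_comp by (intro arg_cong[where f="\<lambda>K. push K R"] ext) (auto simp: pi2_def split: prod.splits)

context
  fixes P1 :: "('x1::finite, 'y1::finite, 'z1::finite) tdist"
    and P2 :: "('x2::finite, 'y2::finite, 'z2::finite) tdist"
  assumes d1: "is_dist P1" and d2: "is_dist P2"
begin

lemma MI_XY_prod: "MI_XY (prod_dist P1 P2) = MI_XY P1 + MI_XY P2"
  unfolding MI_XY_def using ent_prod_X[OF d1 d2] ent_prod_Y[OF d1 d2] ent_prod_XY[OF d1 d2] by simp
lemma MI_XZ_prod: "MI_XZ (prod_dist P1 P2) = MI_XZ P1 + MI_XZ P2"
  unfolding MI_XZ_def using ent_prod_X[OF d1 d2] ent_prod_Z[OF d1 d2] ent_prod_XZ[OF d1 d2] by simp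
lemma F_prod: "MI_X_YZ (prod_dist P1 P2) = MI_X_YZ P1 + MI_X_YZ P2"
  unfolding MI_X_YZ_def using ent_prod_X[OF d1 d2] ent_prod_YZ[OF d1 d2] ent_prod[OF d1 d2] by simp

end

lemma IF_prod:
  fixes P1 :: "('x1::finite, 'y1::finite, 'z1::finite) tdist"
    and P2 :: "('x2::finite, 'y2::finite, 'z2::finite) tdist"
  assumes d1: "is_dist P1" and d2: "is_dist P2"
  shows "IF (prod_dist P1 P2) = IF P1 + IF P2"
proof -
  let ?P = "prod_dist P1 P2"
  have bb: "bdd_below (MI_X_YZ ` DeltaP P)" for P :: "('a::finite,'b::finite,'c::finite) tdist"
    by (rule bdd_belowI[where m=0]) (auto simp: DeltaP_def F_nonneg)
  have ne1: "DeltaP P1 \<noteq> {}" and ne2: "DeltaP P2 \<noteq> {}" and ne: "DeltaP ?P \<noteq> {}"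
    using self_DP d1 d2 dist_prod[OF d1 d2] by auto
  have le: "IF ?P \<le> MI_X_YZ Q1 + MI_X_YZ Q2" if q1: "Q1 \<in> DeltaP P1" and q2: "Q2 \<in> DeltaP P2" for Q1 Q2
  proof -
    have e1: "is_dist Q1" "is_dist Q2" using q1 q2 by (auto simp: DeltaP_def)
    have "prod_dist Q1 Q2 \<in> DeltaP ?P"
      using q1 q2 dist_prod[OF e1] unfolding DeltaP_def by (simp add: margXY_prod margXZ_prod)
    then have "IF ?P \<le> MI_X_YZ (prod_dist Q1 Q2)" unfolding IF_def by (intro cInf_lower bb) auto
    then show ?thesis using F_prod[OF e1] by simp
  qed
  have "IF ?P - IF P2 \<le> IF P1"
    unfolding IF_def[of P1]
  proof (rule cInf_greatest)
    show "MI_X_YZ ` DeltaP P1 \<noteq> {}" using ne1 by simp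
    fix t assume "t \<in> MI_X_YZ ` DeltaP P1"
    then obtain Q1 where q1: "Q1 \<in> DeltaP P1" "t = MI_X_YZ Q1" by auto
    have "IF ?P - t \<le> IF P2" unfolding IF_def[of P2]
    proof (rule cInf_greatest)
      show "MI_X_YZ ` DeltaP P2 \<noteq> {}" using ne2 by simp
      fix u assume "u \<in> MI_X_YZ ` DeltaP P2"
      then obtain Q2 where "Q2 \<in> DeltaP P2" "u = MI_X_YZ Q2" by auto
      then show "IF ?P - t \<le> u" using le[OF q1(1)] q1(2) by force
    qed
    then show "IF ?P - IF P2 \<le> t" by simp
  qed
  moreover have "IF P1 + IF P2 \<le> IF ?P"
    unfolding IF_def[of ?P]
  proof (rule cInf_greatest)
    show "MI_X_YZ ` DeltaP ?P \<noteq> {}" using ne by simp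
    fix t assume "t \<in> MI_X_YZ ` DeltaP ?P"
    then obtain Q where q: "Q \<in> DeltaP ?P" "t = MI_X_YZ Q" by auto
    have dq: "is_dist Q" and mq: "margXY Q = margXY ?P" "margXZ Q = margXZ ?P" using q by (auto simp: DeltaP_def)
    let ?Q1 = "push pi1 Q" and ?Q2 = "push pi2 Q"
    have m1: "margXY ?Q1 = margXY P1" "margXZ ?Q1 = margXZ P1"
      unfolding XY_pi1 XZ_pi1 mq by (simp_all add: XY_pi1[symmetric] XZ_pi1[symmetric] pi1_prod[OF d2])
    have m2: "margXY ?Q2 = margXY P2" "margXZ ?Q2 = margXZ P2"
      unfolding XY_pi2 XZ_pi2 mq by (simp_all add: XY_pi2[symmetric] XZ_pi2[symmetric] pi2_prod[OF d1])
    have q1: "?Q1 \<in> DeltaP P1" and q2: "?Q2 \<in> DeltaP P2"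
      using m1 m2 dist_push[OF dq] by (auto simp: DeltaP_def)
    have i1: "IF P1 \<le> MI_X_YZ ?Q1" unfolding IF_def using q1 by (intro cInf_lower bb) auto
    have i2: "IF P2 \<le> MI_X_YZ ?Q2" unfolding IF_def using q2 by (intro cInf_lower bb) auto
    have x1: "margX ?Q1 = margX P1" using m1 by (metis margX_XY)
    have x2: "margX ?Q2 = margX P2" using m2 by (metis margX_XY)
    have xq: "margX Q = margX ?P" using mq by (metis margX_XY)
    have hyz1: "ent (margYZ ?Q1) = H Q (\<lambda>(x,y,z). (fst y, fst z))"
      unfolding margYZ_push push_comp ent_push by (rule H_cong) (auto simp: pi1_def split: prod.splits)
    have hyz2: "ent (margYZ ?Q2) = H Q (\<lambda>(x,y,z). (snd y, snd z))"
      unfolding margYZ_push push_comp ent_push by (rule H_cong) (auto simp: pi2_def split: prod.splits)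
    have "MI_X_YZ ?Q1 + MI_X_YZ ?Q2 \<le> MI_X_YZ Q"
      using key[OF dq] ent_prod_X[OF d1 d2]
      unfolding MI_X_YZ_def x1 x2 xq hyz1 hyz2 ent_push
      by (simp add: margYZ_push ent_push ent_as_H[of Q])
    then show "IF P1 + IF P2 \<le> t" using i1 i2 q(2) by linarith
  qed
  ultimately show ?thesis by linarith
qed

theorem mainTheorem14:
  fixes P1 :: "('x1::finite, 'y1::finite, 'z1::finite) tdist"
    and P2 :: "('x2::finite, 'y2::finite, 'z2::finite) tdist"
  assumes "is_dist P1" and "is_dist P2"
  shows "SI (prod_dist P1 P2) = SI P1 + SI P2
    \<and> CI (prod_dist P1 P2) = CI P1 + CI P2
    \<and> UI_Y (prod_dist P1 P2) = UI_Y P1 + UI_Y P2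
    \<and> UI_Z (prod_dist P1 P2) = UI_Z P1 + UI_Z P2"
  using reps[OF assms(1)] reps[OF assms(2)] reps[OF dist_prod[OF assms]]
    IF_prod[OF assms] MI_XY_prod[OF assms] MI_XZ_prod[OF assms] F_prod[OF assms]
  by simp

end
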